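(* Let $E$ be a complex Banach lattice and let $A: E \supseteq D(A) \to E$ be a densely defined, closed, real linear operator. Let $u \in E_+$, let $\varphi \in E'_+$ be strictly positive, and assume $D(A)\subseteq E_u$ and $D(A')\subseteq (E')_\varphi$. Let $\mu_0$ be a real number in $\rho(A)$. (a) $R(\mu_0,A)\succeq -u\otimes\varphi$ if and only if $R(\mu,A)\succeq -u\otimes\varphi$ for all real $\mu\in\rho(A)$. (b) $R(\mu_0,A)\preceq u\otimes\varphi$ if and only if $R(\mu,A)\preceq u\otimes\varphi$ for all real $\mu\in\rho(A)$.
   Context: $E_{\mathbb{R}}$ denotes the real part of $E$. A linear operator $A$ is real if $D(A) = (D(A)\cap E_{\mathbb{R}}) + i(D(A)\cap E_{\mathbb{R}})$ and $A$ maps $D(A)\cap E_{\mathbb{R}}$ into $E_{\mathbb{R}}$. $R(\mu,A) = (\mu - A)^{-1}$. For bounded real operators, $T\succeq S$ (equivalently $S\preceq T$) means $T - cS$ maps $E_+$ into $E_+$ for some $c>0$. $u\otimes\varphi$ is $f\mapsto\langle\varphi,f\rangle u$. $\varphi$ strictly positive: $\langle\varphi,f\rangle>0$ for all $0\ne f\in E_+$. $E_u = \{x : |x|\le cu \text{ for some } c\ge0\}$; $(E')_\varphi = \{x'\in E' : |x'|\le c\varphi \text{ for some } c\ge 0\}$. *)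

theory Defs
  imports "HOL-Analysis.Analysis"
begin

class banach_lattice = banach + ordered_real_vector + lattice +
  assumes lattice_norm: "sup x (- x) \<le> sup y (- y) \<Longrightarrow> norm x \<le> norm y"

text \<open>The complex Banach lattice E is the complexification of the real Banach lattice
  E_R = 'a; an element x + i y is represented by the pair (x, y).  The topology of E is
  the product topology (equivalent to the complex lattice norm topology).\<close>

definition cscale :: "complex \<Rightarrow> 'a::real_vector \<times> 'a \<Rightarrow> 'a \<times> 'a" where
  "cscale c x = (Re c *\<^sub>R fst x - Im c *\<^sub>R snd x, Re c *\<^sub>R snd x + Im c *\<^sub>R fst x)"

definition realpart :: "('a::banach_lattice \<times> 'a) set" where
  "realpart = {(y, 0) | y. True}"

definition poscone :: "('a::banach_lattice \<times> 'a) set" where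
  "poscone = {(y, 0) | y. 0 \<le> y}"

definition lmod :: "'a::banach_lattice \<times> 'a \<Rightarrow> 'a" where
  "lmod x = (THE m. (\<forall>t::real. cos t *\<^sub>R fst x + sin t *\<^sub>R snd x \<le> m) \<and>
                    (\<forall>m'. (\<forall>t::real. cos t *\<^sub>R fst x + sin t *\<^sub>R snd x \<le> m') \<longrightarrow> m \<le> m'))"

definition pideal :: "'a::banach_lattice \<Rightarrow> ('a \<times> 'a) set" where
  "pideal u = {x. \<exists>c\<ge>0. lmod x \<le> c *\<^sub>R u}"

definition lin_op :: "('a::banach_lattice \<times> 'a) set \<Rightarrow> ('a \<times> 'a \<Rightarrow> 'a \<times> 'a) \<Rightarrow> bool" where
  "lin_op D A \<longleftrightarrow> 0 \<in> D \<and>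
     (\<forall>x\<in>D. \<forall>y\<in>D. x + y \<in> D \<and> A (x + y) = A x + A y) \<and>
     (\<forall>c x. x \<in> D \<longrightarrow> cscale c x \<in> D \<and> A (cscale c x) = cscale c (A x))"

definition densely_defined :: "('a::banach_lattice \<times> 'a) set \<Rightarrow> bool" where
  "densely_defined D \<longleftrightarrow> closure D = UNIV"

definition closed_op :: "('a::banach_lattice \<times> 'a) set \<Rightarrow> ('a \<times> 'a \<Rightarrow> 'a \<times> 'a) \<Rightarrow> bool" where
  "closed_op D A \<longleftrightarrow> closed {(x, A x) | x. x \<in> D}"

definition real_op :: "('a::banach_lattice \<times> 'a) set \<Rightarrow> ('a \<times> 'a \<Rightarrow> 'a \<times> 'a) \<Rightarrow> bool" where
  "real_op D A \<longleftrightarrow>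
     D = {p + cscale \<i> q | p q. p \<in> D \<inter> realpart \<and> q \<in> D \<inter> realpart} \<and>
     (\<forall>x \<in> D \<inter> realpart. A x \<in> realpart)"

definition resolvent :: "complex \<Rightarrow> ('a::banach_lattice \<times> 'a) set \<Rightarrow> ('a \<times> 'a \<Rightarrow> 'a \<times> 'a)
    \<Rightarrow> 'a \<times> 'a \<Rightarrow> 'a \<times> 'a" where
  "resolvent \<mu> D A y = (THE x. x \<in> D \<and> cscale \<mu> x - A x = y)"

definition resolvent_set :: "('a::banach_lattice \<times> 'a) set \<Rightarrow> ('a \<times> 'a \<Rightarrow> 'a \<times> 'a) \<Rightarrow> complex set" where
  "resolvent_set D A = {\<mu>. bij_betw (\<lambda>x. cscale \<mu> x - A x) D UNIV \<and>
      (\<exists>K. \<forall>y. norm (resolvent \<mu> D A y) \<le> K * norm y)}"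

definition cdual :: "('a::banach_lattice \<times> 'a \<Rightarrow> complex) set" where
  "cdual = {f. continuous_on UNIV f \<and> (\<forall>x y. f (x + y) = f x + f y) \<and>
                (\<forall>c x. f (cscale c x) = c * f x)}"

definition adj_dom :: "('a::banach_lattice \<times> 'a) set \<Rightarrow> ('a \<times> 'a \<Rightarrow> 'a \<times> 'a)
    \<Rightarrow> ('a \<times> 'a \<Rightarrow> complex) set" where
  "adj_dom D A = {f \<in> cdual. \<exists>g \<in> cdual. \<forall>x \<in> D. f (A x) = g x}"

definition pos_functional :: "('a::banach_lattice \<times> 'a \<Rightarrow> complex) \<Rightarrow> bool" where
  "pos_functional f \<longleftrightarrow> f \<in> cdual \<and> (\<forall>x \<in> poscone. Im (f x) = 0 \<and> Re (f x) \<ge> 0)"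

definition strictly_pos :: "('a::banach_lattice \<times> 'a \<Rightarrow> complex) \<Rightarrow> bool" where
  "strictly_pos f \<longleftrightarrow> (\<forall>x \<in> poscone. x \<noteq> 0 \<longrightarrow> Im (f x) = 0 \<and> Re (f x) > 0)"

text \<open>Modulus of a functional f in E', evaluated at x \<in> E_+ (Riesz-Kantorovich):
  |f|(x) = sup {|f(w)| : |w| \<le> x}.\<close>
definition dmod :: "('a::banach_lattice \<times> 'a \<Rightarrow> complex) \<Rightarrow> 'a \<Rightarrow> real" where
  "dmod f x = Sup {cmod (f w) | w. lmod w \<le> x}"

definition dual_pideal :: "('a::banach_lattice \<times> 'a \<Rightarrow> complex) \<Rightarrow> ('a \<times> 'a \<Rightarrow> complex) set" where
  "dual_pideal \<phi> = {f \<in> cdual. \<exists>c\<ge>0. \<forall>x. 0 \<le> x \<longrightarrow> dmod f x \<le> c * Re (\<phi> (x, 0))}"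

definition tensor :: "'a::banach_lattice \<Rightarrow> ('a \<times> 'a \<Rightarrow> complex) \<Rightarrow> 'a \<times> 'a \<Rightarrow> 'a \<times> 'a" where
  "tensor u \<phi> x = cscale (\<phi> x) (u, 0)"

definition op_succeq :: "('a::banach_lattice \<times> 'a \<Rightarrow> 'a \<times> 'a) \<Rightarrow> ('a \<times> 'a \<Rightarrow> 'a \<times> 'a) \<Rightarrow> bool" where
  "op_succeq T S \<longleftrightarrow> (\<exists>c::real>0. \<forall>x \<in> poscone. T x - c *\<^sub>R S x \<in> poscone)"

end

theory Submission
  imports Defs
begin


definition labs :: "'a::banach_lattice \<Rightarrow> 'a" where "labs x = sup x (-x)"

lemma labs_ge1: "x \<le> labs (x::'a::banach_lattice)" unfolding labs_def by simp
lemma labs_ge2: "-x \<le> labs (x::'a::banach_lattice)" unfolding labs_def by simp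
lemma labs_le_iff: "labs (x::'a::banach_lattice) \<le> y \<longleftrightarrow> x \<le> y \<and> -x \<le> y"
  unfolding labs_def by simp

lemma half_nonneg: assumes "0 \<le> a + (a::'a::banach_lattice)" shows "0 \<le> a"
proof -
  have "a = (1/2) *\<^sub>R (2 *\<^sub>R a)" by simp
  then have "a = (1/2) *\<^sub>R (a + a)" by (simp only: scaleR_2)
  also have "0 \<le> \<dots>" using assms by (intro scaleR_nonneg_nonneg) auto
  finally show ?thesis .
qed

lemma labs_nonneg: "0 \<le> labs (x::'a::banach_lattice)"
proof -
  have "x + -x \<le> labs x + labs x" by (intro add_mono labs_ge1 labs_ge2)
  then have "0 \<le> labs x + labs x" by simp
  then show ?thesis by (rule half_nonneg)
qed

lemma labs_pos: "0 \<le> (x::'a::banach_lattice) \<Longrightarrow> labs x = x"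
  unfolding labs_def by (rule sup_absorb1) (meson neg_le_0_iff_le order_trans)

lemma labs_labs: "labs (labs (x::'a::banach_lattice)) = labs x"
  by (rule labs_pos[OF labs_nonneg])

lemma labs_neg: "labs (- (x::'a::banach_lattice)) = labs x"
  unfolding labs_def by (simp add: sup_commute)

lemma labs_zero: "labs (0::'a::banach_lattice) = 0" by (simp add: labs_pos)

lemma norm_mono_labs: "labs x \<le> labs (y::'a::banach_lattice) \<Longrightarrow> norm x \<le> norm y"
  unfolding labs_def by (rule lattice_norm)

lemma norm_labs: "norm (labs (x::'a::banach_lattice)) = norm x"
  by (intro antisym norm_mono_labs) (simp_all add: labs_labs)

lemma norm_le_of_labs: "labs (x::'a::banach_lattice) \<le> y \<Longrightarrow> norm x \<le> norm y"
proof -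
  assume a: "labs x \<le> y"
  then have "0 \<le> y" using labs_nonneg order_trans by blast
  then have "labs y = y" by (rule labs_pos)
  with a show ?thesis by (intro norm_mono_labs) simp
qed

lemma norm_mono_pos: "0 \<le> (x::'a::banach_lattice) \<Longrightarrow> x \<le> y \<Longrightarrow> norm x \<le> norm y"
  by (intro norm_le_of_labs) (simp add: labs_pos)

lemma labs_triangle: "labs (x + y) \<le> labs x + labs (y::'a::banach_lattice)"
  unfolding labs_le_iff
proof
  show "x + y \<le> labs x + labs y" by (intro add_mono labs_ge1)
  have "-x + -y \<le> labs x + labs y" by (intro add_mono labs_ge2)
  then show "- (x + y) \<le> labs x + labs y" by (simp add: add.commute)
qed

lemma scaleR_sup_pos:
  assumes "0 < c" shows "c *\<^sub>R sup a b = sup (c *\<^sub>R a) (c *\<^sub>R (b::'a::banach_lattice))"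
proof (rule antisym)
  show "sup (c *\<^sub>R a) (c *\<^sub>R b) \<le> c *\<^sub>R sup a b"
    using assms by (auto intro!: scaleR_left_mono)
  have "a \<le> (1/c) *\<^sub>R sup (c *\<^sub>R a) (c *\<^sub>R b)"
  proof -
    have "(1/c) *\<^sub>R (c *\<^sub>R a) \<le> (1/c) *\<^sub>R sup (c *\<^sub>R a) (c *\<^sub>R b)"
      using assms by (intro scaleR_left_mono) auto
    then show ?thesis using assms by simp
  qed
  moreover have "b \<le> (1/c) *\<^sub>R sup (c *\<^sub>R a) (c *\<^sub>R b)"
  proof -
    have "(1/c) *\<^sub>R (c *\<^sub>R b) \<le> (1/c) *\<^sub>R sup (c *\<^sub>R a) (c *\<^sub>R b)"
      using assms by (intro scaleR_left_mono) auto
    then show ?thesis using assms by simp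
  qed
  ultimately have "sup a b \<le> (1/c) *\<^sub>R sup (c *\<^sub>R a) (c *\<^sub>R b)" by simp
  then have "c *\<^sub>R sup a b \<le> c *\<^sub>R ((1/c) *\<^sub>R sup (c *\<^sub>R a) (c *\<^sub>R b))"
    using assms by (intro scaleR_left_mono) auto
  then show "c *\<^sub>R sup a b \<le> sup (c *\<^sub>R a) (c *\<^sub>R b)" using assms by simp
qed

lemma labs_scaleR: "labs (c *\<^sub>R (x::'a::banach_lattice)) = \<bar>c\<bar> *\<^sub>R labs x"
proof -
  consider "c = 0" | "c > 0" | "c < 0" by linarith
  then show ?thesis
  proof cases
    case 1 then show ?thesis by (simp add: labs_zero)
  next
    case 2 then show ?thesis unfolding labs_def by (simp add: scaleR_sup_pos)
  next
    case 3
    have "labs (c *\<^sub>R x) = labs ((-c) *\<^sub>R x)" by (metis labs_neg scaleR_minus_left)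
    also have "\<dots> = (-c) *\<^sub>R labs x" using 3 unfolding labs_def
      using scaleR_sup_pos[of "-c" x "-x"] by simp
    finally show ?thesis using 3 by simp
  qed
qed

lemma scale_le_labs: "c *\<^sub>R (x::'a::banach_lattice) \<le> \<bar>c\<bar> *\<^sub>R labs x"
  by (metis labs_ge1 labs_scaleR)

lemma scale_ge_labs: "- (\<bar>c\<bar> *\<^sub>R labs x) \<le> c *\<^sub>R (x::'a::banach_lattice)"
  by (metis labs_ge2 labs_scaleR minus_le_iff)

lemma sup_add_distrib: "sup a b + c = sup (a + c) (b + (c::'a::banach_lattice))"
proof (rule antisym)
  show "sup (a + c) (b + c) \<le> sup a b + c" by (auto intro: add_right_mono)
  have "a \<le> sup (a + c) (b + c) - c" "b \<le> sup (a + c) (b + c) - c"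
    by (simp_all add: le_diff_eq)
  then have "sup a b \<le> sup (a + c) (b + c) - c" by simp
  then show "sup a b + c \<le> sup (a + c) (b + c)" by (simp add: le_diff_eq)
qed

lemma sup_diff_le: "sup a c - sup b c \<le> labs (a - (b::'a::banach_lattice))"
proof -
  let ?L = "labs (a - b)"
  have "a = b + (a - b)" by simp
  also have "\<dots> \<le> b + ?L" using labs_ge1[of "a - b"] by (rule add_left_mono)
  finally have "a \<le> b + ?L" .
  moreover have "c \<le> c + ?L" using labs_nonneg[of "a - b"] by simp
  ultimately have "sup a c \<le> sup (b + ?L) (c + ?L)" by (auto intro: le_supI1 le_supI2)
  also have "\<dots> = sup b c + ?L" by (simp add: sup_add_distrib)
  finally show ?thesis by (simp add: diff_le_eq add.commute)
qed

lemma labs_sup_diff: "labs (sup a c - sup b c) \<le> labs (a - (b::'a::banach_lattice))"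
  unfolding labs_le_iff
proof
  show "sup a c - sup b c \<le> labs (a - b)" by (rule sup_diff_le)
  have "sup b c - sup a c \<le> labs (b - a)" by (rule sup_diff_le)
  also have "labs (b - a) = labs (a - b)" by (metis labs_neg minus_diff_eq)
  finally show "- (sup a c - sup b c) \<le> labs (a - b)" by simp
qed

lemma closed_nonneg: "closed {x::'a::banach_lattice. 0 \<le> x}"
proof -
  let ?h = "\<lambda>x::'a. sup (-x) 0"
  have eq: "{x::'a. 0 \<le> x} = {x. ?h x = 0}"
    by (auto simp: sup_absorb2 neg_le_0_iff_le) (metis sup_ge1 neg_le_0_iff_le)
  have "1-lipschitz_on UNIV ?h"
    unfolding lipschitz_on_def dist_norm
  proof (intro conjI ballI)
    fix x y :: 'a
    have "labs (?h x - ?h y) \<le> labs (-x - -y)" by (rule labs_sup_diff)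
    then have "norm (?h x - ?h y) \<le> norm (-x - -y)" by (rule norm_mono_labs[OF order_trans[OF _ eq_refl]]) (simp add: labs_labs)
    also have "norm (-x - -y) = norm (x - y)" by (metis minus_diff_eq minus_diff_minus norm_minus_cancel)
    finally show "norm (?h x - ?h y) \<le> 1 * norm (x - y)" by simp
  qed simp
  then have "continuous_on UNIV ?h" by (rule lipschitz_on_continuous_on)
  then show ?thesis unfolding eq by (intro closed_Collect_eq) auto
qed

lemma closed_le_fun:
  assumes "continuous_on UNIV f" "continuous_on UNIV g"
  shows "closed {x. f x \<le> (g x :: 'a::banach_lattice)}"
proof -
  have "{x. f x \<le> g x} = (\<lambda>x. g x - f x) -` {x. 0 \<le> x}" by auto
  moreover have "continuous_on UNIV (\<lambda>x. g x - f x)" using assms by (intro continuous_intros)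
  ultimately have "closed ((\<lambda>x. g x - f x) -` {x. 0 \<le> x})" by (intro closed_vimage closed_nonneg)
  then show ?thesis by (simp only: \<open>{x. f x \<le> g x} = _\<close>)
qed

lemma closed_le_const: "closed {x. x \<le> (v::'a::banach_lattice)}" "closed {x. v \<le> (x::'a::banach_lattice)}"
  by (rule closed_le_fun; simp add: continuous_on_const continuous_on_id)+


lemma cos_sub_le: "\<bar>cos t - cos s\<bar> \<le> \<bar>t - s\<bar>" for t s :: real
proof -
  have "\<bar>cos t - cos s\<bar> = 2 * \<bar>sin ((t+s)/2)\<bar> * \<bar>sin ((s-t)/2)\<bar>"
    by (simp add: cos_diff_cos abs_mult)
  also have "\<dots> \<le> 2 * 1 * \<bar>(s-t)/2\<bar>"
    by (intro mult_mono abs_sin_le_one abs_sin_x_le_abs_x) auto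
  finally show ?thesis by simp
qed

lemma sin_sub_le: "\<bar>sin t - sin s\<bar> \<le> \<bar>t - s\<bar>" for t s :: real
proof -
  have "\<bar>sin t - sin s\<bar> = 2 * \<bar>sin ((t-s)/2)\<bar> * \<bar>cos ((t+s)/2)\<bar>"
    by (simp add: sin_diff_sin abs_mult)
  also have "\<dots> \<le> 2 * \<bar>(t-s)/2\<bar> * 1"
    by (intro mult_mono abs_cos_le_one abs_sin_x_le_abs_x) auto
  finally show ?thesis by simp
qed

lemma g_diff_le:
  fixes a b :: "'a::banach_lattice"
  shows "(cos t *\<^sub>R a + sin t *\<^sub>R b) - (cos s *\<^sub>R a + sin s *\<^sub>R b)
           \<le> \<bar>t - s\<bar> *\<^sub>R (labs a + labs b)"
proof -
  have "(cos t *\<^sub>R a + sin t *\<^sub>R b) - (cos s *\<^sub>R a + sin s *\<^sub>R b)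
      = (cos t - cos s) *\<^sub>R a + (sin t - sin s) *\<^sub>R b"
    by (simp add: algebra_simps)
  also have "\<dots> \<le> \<bar>cos t - cos s\<bar> *\<^sub>R labs a + \<bar>sin t - sin s\<bar> *\<^sub>R labs b"
    by (intro add_mono scale_le_labs)
  also have "\<dots> \<le> \<bar>t - s\<bar> *\<^sub>R labs a + \<bar>t - s\<bar> *\<^sub>R labs b"
    by (intro add_mono scaleR_right_mono labs_nonneg cos_sub_le sin_sub_le)
  also have "\<dots> = \<bar>t - s\<bar> *\<^sub>R (labs a + labs b)" by (simp add: scaleR_right_distrib)
  finally show ?thesis .
qed

lemma grid_approx:
  fixes a b :: "'a::banach_lattice" and n :: nat
  shows "\<exists>k\<le>n. cos t *\<^sub>R a + sin t *\<^sub>R b \<le>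
     (cos (2*pi*real k/real (Suc n)) *\<^sub>R a + sin (2*pi*real k/real (Suc n)) *\<^sub>R b)
     + (2*pi/real (Suc n)) *\<^sub>R (labs a + labs b)"
proof -
  define N where "N = real (Suc n)"
  have N0: "N > 0" unfolding N_def by simp
  define q where "q = floor (t * N / (2*pi))"
  have q1: "real_of_int q \<le> t * N / (2*pi)" and q2: "t * N / (2*pi) < real_of_int q + 1"
    unfolding q_def by linarith+
  define s0 where "s0 = 2*pi*real_of_int q / N"
  have "s0 \<le> t" using q1 N0 pi_gt_zero unfolding s0_def by (simp add: field_simps)
  moreover have "t < s0 + 2*pi/N" using q2 N0 pi_gt_zero unfolding s0_def by (simp add: field_simps)
  ultimately have ts: "\<bar>t - s0\<bar> \<le> 2*pi/N" by simp
  define d where "d = q div int (Suc n)"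
  define j where "j = nat (q mod int (Suc n))"
  have jn: "j \<le> n" unfolding j_def
    using pos_mod_bound[of "int (Suc n)" q] by linarith
  have jq: "int j = q mod int (Suc n)" unfolding j_def by simp
  have "q = d * int (Suc n) + int j" unfolding d_def jq by (rule div_mult_mod_eq[symmetric])
  then have "real_of_int q = real_of_int d * N + real j" unfolding N_def
    by (metis of_int_add of_int_mult of_int_of_nat_eq)
  then have s0eq: "s0 = 2*pi*real j/N + of_int d * (2 * of_real pi)"
    unfolding s0_def using N0 by (simp add: field_simps)
  have cs: "cos s0 = cos (2*pi*real j/N)" "sin s0 = sin (2*pi*real j/N)"
    unfolding s0eq by (rule cos.plus_of_int, rule sin.plus_of_int)
  have "cos t *\<^sub>R a + sin t *\<^sub>R b \<le> (cos s0 *\<^sub>R a + sin s0 *\<^sub>R b) + \<bar>t - s0\<bar> *\<^sub>R (labs a + labs b)"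
    using g_diff_le[of t a b s0] by (simp add: diff_le_eq add.commute)
  also have "\<dots> \<le> (cos s0 *\<^sub>R a + sin s0 *\<^sub>R b) + (2*pi/N) *\<^sub>R (labs a + labs b)"
    using ts by (intro add_left_mono scaleR_right_mono add_nonneg_nonneg labs_nonneg)
  finally show ?thesis using jn unfolding cs N_def by blast
qed

lemma lub_exists:
  fixes a b :: "'a::banach_lattice"
  shows "\<exists>m. (\<forall>t. cos t *\<^sub>R a + sin t *\<^sub>R b \<le> m) \<and>
             (\<forall>m'. (\<forall>t. cos t *\<^sub>R a + sin t *\<^sub>R b \<le> m') \<longrightarrow> m \<le> m')"
proof -
  define g where "g t = cos t *\<^sub>R a + sin t *\<^sub>R b" for t
  define W where "W = labs a + labs b"
  define e where "e n = 2*pi/real (Suc n)" for n :: nat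
  define S where "S n = g ` (\<lambda>k. 2*pi*real k/real (Suc n)) ` {..n}" for n
  define m where "m n = Sup_fin (S n)" for n
  have fin: "finite (S n)" for n unfolding S_def by simp
  have ne: "S n \<noteq> {}" for n unfolding S_def by simp
  have W0: "0 \<le> W" unfolding W_def by (intro add_nonneg_nonneg labs_nonneg)
  have e0: "0 \<le> e n" for n unfolding e_def by simp
  have up: "g t \<le> m n + e n *\<^sub>R W" for t n
  proof -
    obtain k where k: "k \<le> n" "g t \<le> g (2*pi*real k/real (Suc n)) + e n *\<^sub>R W"
      using grid_approx[of n t a b] unfolding g_def e_def W_def by blast
    have "g (2*pi*real k/real (Suc n)) \<le> m n"
      unfolding m_def using k(1) by (intro Sup_fin.coboundedI fin) (auto simp: S_def)
    with k(2) show ?thesis by (meson add_right_mono order_trans)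
  qed
  have least: "m n \<le> m'" if "\<forall>t. g t \<le> m'" for n m'
    unfolding m_def using that by (intro Sup_fin.boundedI fin ne) (auto simp: S_def)
  have diff: "m p - m q \<le> e q *\<^sub>R W" for p q
  proof -
    have "m p \<le> m q + e q *\<^sub>R W" using up by (intro least) auto
    then show ?thesis by (simp add: diff_le_eq add.commute)
  qed
  have emono: "e q \<le> e N" if "N \<le> q" for q N
    unfolding e_def using that pi_gt_zero by (intro divide_left_mono) auto
  have "Cauchy m"
  proof (rule CauchyI)
    fix \<epsilon> :: real assume \<epsilon>: "0 < \<epsilon>"
    obtain N0 :: nat where N0: "2*pi*(norm W + 1)/\<epsilon> < real N0"
      using reals_Archimedean2 by blast
    have eN0: "e N0 * (norm W + 1) < \<epsilon>"
    proof -
      have "2*pi*(norm W + 1) < \<epsilon> * real (Suc N0)" using N0 \<epsilon> by (simp add: field_simps)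
      then show ?thesis unfolding e_def by (simp add: field_simps)
    qed
    show "\<exists>M. \<forall>p\<ge>M. \<forall>q\<ge>M. norm (m p - m q) < \<epsilon>"
    proof (intro exI allI impI)
      fix p q assume p: "N0 \<le> p" and q: "N0 \<le> q"
      have "labs (m p - m q) \<le> e N0 *\<^sub>R W"
        unfolding labs_le_iff
      proof
        show "m p - m q \<le> e N0 *\<^sub>R W"
          using diff[of p q] scaleR_right_mono[OF emono[OF q] W0] by (rule order_trans)
        have "m q - m p \<le> e N0 *\<^sub>R W"
          using diff[of q p] scaleR_right_mono[OF emono[OF p] W0] by (rule order_trans)
        then show "- (m p - m q) \<le> e N0 *\<^sub>R W" by simp
      qed
      then have "norm (m p - m q) \<le> norm (e N0 *\<^sub>R W)" by (rule norm_le_of_labs)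
      also have "\<dots> = e N0 * norm W" using e0 by simp
      also have "\<dots> \<le> e N0 * (norm W + 1)" using e0 by (simp add: mult_left_mono)
      finally show "norm (m p - m q) < \<epsilon>" using eN0 by linarith
    qed
  qed
  then obtain M where M: "m \<longlonglongrightarrow> M" using Cauchy_convergent_iff convergent_def by blast
  have "e \<longlonglongrightarrow> 2*pi*0"
    unfolding e_def divide_inverse by (intro tendsto_mult tendsto_const LIMSEQ_inverse_real_of_nat)
  then have elim: "e \<longlonglongrightarrow> 0" by simp
  have lim2: "(\<lambda>n. m n + e n *\<^sub>R W) \<longlonglongrightarrow> M + 0 *\<^sub>R W"
    by (intro tendsto_add M tendsto_scaleR elim tendsto_const)
  show ?thesis
  proof (intro exI conjI allI impI)
    fix t
    show "cos t *\<^sub>R a + sin t *\<^sub>R b \<le> M"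
      using closed_sequentially[OF closed_le_const(2)[of "g t"], of "\<lambda>n. m n + e n *\<^sub>R W" "M + 0 *\<^sub>R W"]
        up lim2 unfolding g_def by simp
  next
    fix m' assume "\<forall>t. cos t *\<^sub>R a + sin t *\<^sub>R b \<le> m'"
    then have "m n \<le> m'" for n using least unfolding g_def by blast
    then show "M \<le> m'"
      using closed_sequentially[OF closed_le_const(1)[of m'], of m M] M by simp
  qed
qed

lemma lmod_spec:
  fixes w :: "'a::banach_lattice \<times> 'a"
  shows "(\<forall>t::real. cos t *\<^sub>R fst w + sin t *\<^sub>R snd w \<le> lmod w) \<and>
         (\<forall>m'. (\<forall>t::real. cos t *\<^sub>R fst w + sin t *\<^sub>R snd w \<le> m') \<longrightarrow> lmod w \<le> m')"
proof -
  let ?P = "\<lambda>m. (\<forall>t::real. cos t *\<^sub>R fst w + sin t *\<^sub>R snd w \<le> m) \<and>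
         (\<forall>m'. (\<forall>t::real. cos t *\<^sub>R fst w + sin t *\<^sub>R snd w \<le> m') \<longrightarrow> m \<le> m')"
  have ex1: "\<exists>!m. ?P m"
  proof -
    obtain m where Pm: "?P m" using lub_exists[of "fst w" "snd w"] by (elim exE)
    have uniq: "m2 = m" if "?P m2" for m2
    proof (rule antisym)
      show "m2 \<le> m" using conjunct2[OF that] conjunct1[OF \<open>?P m\<close>] by simp
      show "m \<le> m2" using conjunct2[OF \<open>?P m\<close>] conjunct1[OF that] by simp
    qed
    show ?thesis using Pm uniq by (rule ex1I)
  qed
  have e: "lmod w = (THE m. ?P m)" unfolding lmod_def by (rule refl)
  show ?thesis unfolding e by (rule theI'[OF ex1])
qed

lemma lmod_fst: "labs (fst w) \<le> lmod (w::'a::banach_lattice \<times> 'a)"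
  unfolding labs_le_iff
proof
  show "fst w \<le> lmod w" using lmod_spec[of w] by (metis cos_zero sin_zero scaleR_one scaleR_zero_left add_0_right)
  show "- fst w \<le> lmod w" using lmod_spec[of w] by (metis cos_pi sin_pi scaleR_minus1_left scaleR_zero_left add_0_right)
qed

lemma lmod_snd: "labs (snd w) \<le> lmod (w::'a::banach_lattice \<times> 'a)"
  unfolding labs_le_iff
proof
  show "snd w \<le> lmod w" using lmod_spec[of w] by (metis cos_pi_half sin_pi_half scaleR_one scaleR_zero_left add_0_left)
  have "cos (-(pi/2)) = 0" "sin (-(pi/2)) = -1" by simp_all
  then show "- snd w \<le> lmod w" using lmod_spec[of w] by (metis scaleR_minus1_left scaleR_zero_left add_0_left)
qed

lemma lmod_real: "lmod (x, 0) = labs (x::'a::banach_lattice)"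
proof (rule antisym)
  have "cos t *\<^sub>R x \<le> labs x" for t
  proof -
    have "cos t *\<^sub>R x \<le> \<bar>cos t\<bar> *\<^sub>R labs x" by (rule scale_le_labs)
    also have "\<dots> \<le> 1 *\<^sub>R labs x" by (intro scaleR_right_mono abs_cos_le_one labs_nonneg)
    finally show ?thesis by simp
  qed
  then show "lmod (x, 0) \<le> labs x" using lmod_spec[of "(x,0)"] by simp
  show "labs x \<le> lmod (x, 0)" using lmod_fst[of "(x,0)"] by simp
qed


definition hb_good :: "'a::real_normed_vector \<Rightarrow> ('a \<times> real) set \<Rightarrow> bool" where
  "hb_good x0 G \<longleftrightarrow> (x0, norm x0) \<in> G \<and>
     (\<forall>p\<in>G. \<forall>q\<in>G. \<forall>c. (fst p + c *\<^sub>R fst q, snd p + c * snd q) \<in> G) \<and>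
     (\<forall>p\<in>G. snd p \<le> norm (fst p))"

lemma hb_lin: "hb_good x0 G \<Longrightarrow> (x, a) \<in> G \<Longrightarrow> (y, b) \<in> G \<Longrightarrow> (x + c *\<^sub>R y, a + c * b) \<in> G"
  unfolding hb_good_def by fastforce

lemma hb_dom: "hb_good x0 G \<Longrightarrow> (x, a) \<in> G \<Longrightarrow> a \<le> norm x"
  unfolding hb_good_def by fastforce

lemma hb_x0: "hb_good x0 G \<Longrightarrow> (x0, norm x0) \<in> G"
  unfolding hb_good_def by simp

lemma hb_zero: "hb_good x0 G \<Longrightarrow> (0, 0) \<in> G"
  using hb_lin[of x0 G x0 "norm x0" x0 "norm x0" "-1"] hb_x0[of x0 G] by simp

lemma hb_scale: "hb_good x0 G \<Longrightarrow> (x, a) \<in> G \<Longrightarrow> (c *\<^sub>R x, c * a) \<in> G"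
  using hb_lin[of x0 G 0 0 x a c] hb_zero[of x0 G] by simp

lemma hb_add: "hb_good x0 G \<Longrightarrow> (x, a) \<in> G \<Longrightarrow> (y, b) \<in> G \<Longrightarrow> (x + y, a + b) \<in> G"
  using hb_lin[of x0 G x a y b 1] by simp

lemma hb_fun: assumes "hb_good x0 G" "(x, a) \<in> G" "(x, b) \<in> G" shows "a = b"
proof -
  have "(x + (-1) *\<^sub>R x, a + (-1) * b) \<in> G" by (rule hb_lin[OF assms])
  then have "(0, a - b) \<in> G" by simp
  then have "((a - b) *\<^sub>R 0, (a - b) * (a - b)) \<in> G" by (rule hb_scale[OF assms(1)])
  then have "(a - b) * (a - b) \<le> norm ((a - b) *\<^sub>R (0::'a))" by (rule hb_dom[OF assms(1)])
  then have "(a - b) * (a - b) \<le> 0" by simp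
  then show ?thesis by (metis eq_iff_diff_eq_0 mult_eq_0_iff not_square_less_zero order_less_le)
qed

lemma hahn_banach_norming:
  fixes x0 :: "'a::real_normed_vector"
  shows "\<exists>\<psi>::'a \<Rightarrow>\<^sub>L real. norm \<psi> \<le> 1 \<and> blinfun_apply \<psi> x0 = norm x0"
proof -
  define A where "A = {G. hb_good x0 G}"
  have "\<exists>M\<in>A. \<forall>X\<in>A. M \<subseteq> X \<longrightarrow> X = M"
  proof (rule Zorn_Lemma2, intro ballI)
    fix C assume C: "C \<in> chains A"
    show "\<exists>U\<in>A. \<forall>X\<in>C. X \<subseteq> U"
    proof (cases "C = {}")
      case True
      define G0 where "G0 = {(c *\<^sub>R x0, c * norm x0) | c. True}"
      have "hb_good x0 G0" unfolding hb_good_def G0_def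
      proof (intro conjI ballI allI)
        show "(x0, norm x0) \<in> {(c *\<^sub>R x0, c * norm x0) |c. True}"
          by (rule CollectI, rule exI[of _ 1]) simp
      next
        fix p q :: "'a \<times> real" and k :: real
        assume "p \<in> {(c *\<^sub>R x0, c * norm x0) |c. True}" "q \<in> {(c *\<^sub>R x0, c * norm x0) |c. True}"
        then obtain c1 c2 where "p = (c1 *\<^sub>R x0, c1 * norm x0)" "q = (c2 *\<^sub>R x0, c2 * norm x0)" by blast
        then show "(fst p + k *\<^sub>R fst q, snd p + k * snd q) \<in> {(c *\<^sub>R x0, c * norm x0) |c. True}"
          by (intro CollectI exI[of _ "c1 + k * c2"]) (simp add: algebra_simps)
      next
        fix p :: "'a \<times> real"
        assume "p \<in> {(c *\<^sub>R x0, c * norm x0) |c. True}"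
        then obtain c1 where "p = (c1 *\<^sub>R x0, c1 * norm x0)" by blast
        then show "snd p \<le> norm (fst p)" by (simp add: mult_right_mono)
      qed
      then show ?thesis using True unfolding A_def by blast
    next
      case False
      have CA: "C \<subseteq> A" using C by (rule chainsD2)
      have "hb_good x0 (\<Union>C)" unfolding hb_good_def
      proof (intro conjI ballI allI)
        obtain X where "X \<in> C" using False by blast
        then show "(x0, norm x0) \<in> \<Union>C" using CA hb_x0 unfolding A_def by blast
      next
        fix p q :: "'a \<times> real" and k :: real
        assume "p \<in> \<Union>C" "q \<in> \<Union>C"
        then obtain X Y where XY: "X \<in> C" "Y \<in> C" "p \<in> X" "q \<in> Y" by blast
        have gX: "hb_good x0 X" and gY: "hb_good x0 Y" using XY CA unfolding A_def by auto
        from chainsD[OF C XY(1,2)] show "(fst p + k *\<^sub>R fst q, snd p + k * snd q) \<in> \<Union>C"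
        proof
          assume "X \<subseteq> Y"
          then have "(fst p + k *\<^sub>R fst q, snd p + k * snd q) \<in> Y"
            using hb_lin[OF gY, of "fst p" "snd p" "fst q" "snd q" k] XY by auto
          then show ?thesis using XY by blast
        next
          assume "Y \<subseteq> X"
          then have "(fst p + k *\<^sub>R fst q, snd p + k * snd q) \<in> X"
            using hb_lin[OF gX, of "fst p" "snd p" "fst q" "snd q" k] XY by auto
          then show ?thesis using XY by blast
        qed
      next
        fix p assume "p \<in> \<Union>C"
        then obtain X where "X \<in> C" "p \<in> X" by blast
        then show "snd p \<le> norm (fst p)" using CA hb_dom[of x0 X "fst p" "snd p"] unfolding A_def by auto
      qed
      then show ?thesis unfolding A_def by blast
    qed
  qed
  then obtain M where MA: "M \<in> A" and Mmax: "\<And>X. X \<in> A \<Longrightarrow> M \<subseteq> X \<Longrightarrow> X = M" by blast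
  have gM: "hb_good x0 M" using MA unfolding A_def by simp
  have total: "\<exists>a. (y, a) \<in> M" for y
  proof (rule ccontr)
    assume nv: "\<nexists>a. (y, a) \<in> M"
    define c where "c = Sup {snd p - norm (fst p - y) | p. p \<in> M}"
    have key: "snd p - norm (fst p - y) \<le> norm (fst q + y) - snd q" if "p \<in> M" "q \<in> M" for p q
    proof -
      have "(fst p + fst q, snd p + snd q) \<in> M"
        using hb_add[OF gM, of "fst p" "snd p" "fst q" "snd q"] that by simp
      then have "snd p + snd q \<le> norm (fst p + fst q)" by (rule hb_dom[OF gM])
      also have "\<dots> = norm ((fst p - y) + (fst q + y))" by simp
      also have "\<dots> \<le> norm (fst p - y) + norm (fst q + y)" by (rule norm_triangle_ineq)
      finally show ?thesis by simp
    qed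
    have z: "(0, 0) \<in> M" by (rule hb_zero[OF gM])
    have c_ge: "snd p - norm (fst p - y) \<le> c" if "p \<in> M" for p
      unfolding c_def
    proof (rule cSup_upper)
      show "snd p - norm (fst p - y) \<in> {snd p - norm (fst p - y) |p. p \<in> M}" using that by blast
      show "bdd_above {snd p - norm (fst p - y) |p. p \<in> M}"
        unfolding bdd_above_def using key[OF _ z] by (intro exI[of _ "norm y"]) auto
    qed
    have c_le: "c \<le> norm (fst q + y) - snd q" if "q \<in> M" for q
      unfolding c_def
      by (rule cSup_least) (use z key[OF _ that] in auto)
    define M' where "M' = {(fst p + t *\<^sub>R y, snd p + t * c) | p t. p \<in> M}"
    have gM': "hb_good x0 M'" unfolding hb_good_def
    proof (intro conjI ballI allI)
      show "(x0, norm x0) \<in> M'" unfolding M'_def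
        using hb_x0[OF gM] by (intro CollectI exI[of _ "(x0, norm x0)"] exI[of _ 0]) simp
    next
      fix p q :: "'a \<times> real" and k :: real
      assume "p \<in> M'" "q \<in> M'"
      then obtain p1 t1 p2 t2 where P: "p = (fst p1 + t1 *\<^sub>R y, snd p1 + t1 * c)" "p1 \<in> M"
        and Q: "q = (fst p2 + t2 *\<^sub>R y, snd p2 + t2 * c)" "p2 \<in> M"
        unfolding M'_def by blast
      have "(fst p1 + k *\<^sub>R fst p2, snd p1 + k * snd p2) \<in> M"
        using hb_lin[OF gM, of "fst p1" "snd p1" "fst p2" "snd p2" k] P Q by simp
      then show "(fst p + k *\<^sub>R fst q, snd p + k * snd q) \<in> M'" unfolding M'_def P Q
        by (intro CollectI exI[of _ "(fst p1 + k *\<^sub>R fst p2, snd p1 + k * snd p2)"] exI[of _ "t1 + k * t2"])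
           (simp add: algebra_simps)
    next
      fix p assume "p \<in> M'"
      then obtain p1 t where P: "p = (fst p1 + t *\<^sub>R y, snd p1 + t * c)" "p1 \<in> M"
        unfolding M'_def by blast
      define x a where "x = fst p1" and "a = snd p1"
      have xa: "(x, a) \<in> M" using P unfolding x_def a_def by simp
      have "a + t * c \<le> norm (x + t *\<^sub>R y)"
      proof -
        consider "t = 0" | "t > 0" | "t < 0" by linarith
        then show ?thesis
        proof cases
          case 1 then show ?thesis using hb_dom[OF gM xa] by simp
        next
          case 2
          have "((1/t) *\<^sub>R x, (1/t) * a) \<in> M" by (rule hb_scale[OF gM xa])
          from c_le[OF this] have "c \<le> norm ((1/t) *\<^sub>R x + y) - (1/t) * a" by simp
          then have "t * c \<le> t * (norm ((1/t) *\<^sub>R x + y) - (1/t) * a)" using 2 by (simp add: mult_left_mono)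
          also have "\<dots> = t * norm ((1/t) *\<^sub>R x + y) - a" using 2 by (simp add: right_diff_distrib)
          also have "t * norm ((1/t) *\<^sub>R x + y) = norm (t *\<^sub>R ((1/t) *\<^sub>R x + y))" using 2 by simp
          also have "t *\<^sub>R ((1/t) *\<^sub>R x + y) = x + t *\<^sub>R y" using 2 by (simp add: algebra_simps)
          finally show ?thesis by simp
        next
          case 3
          define s where "s = -t"
          have s0: "s > 0" using 3 unfolding s_def by simp
          have "((1/s) *\<^sub>R x, (1/s) * a) \<in> M" by (rule hb_scale[OF gM xa])
          from c_ge[OF this] have "(1/s) * a - norm ((1/s) *\<^sub>R x - y) \<le> c" by simp
          then have i1: "s * ((1/s) * a - norm ((1/s) *\<^sub>R x - y)) \<le> s * c" using s0 by (simp add: mult_left_mono)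
          have e1: "s * ((1/s) * a - norm ((1/s) *\<^sub>R x - y)) = a - s * norm ((1/s) *\<^sub>R x - y)"
            using s0 by (simp add: right_diff_distrib)
          have e2: "s * norm ((1/s) *\<^sub>R x - y) = norm (s *\<^sub>R ((1/s) *\<^sub>R x - y))" using s0 by simp
          have e3: "s *\<^sub>R ((1/s) *\<^sub>R x - y) = x + t *\<^sub>R y" using s0 unfolding s_def by (simp add: algebra_simps)
          have e4: "s * c = - (t * c)" unfolding s_def by simp
          from i1 have "a - norm (x + t *\<^sub>R y) \<le> s * c" by (simp only: e1 e2 e3)
          then show ?thesis using e4 by linarith
        qed
      qed
      then show "snd p \<le> norm (fst p)" using P unfolding x_def a_def by simp
    qed
    have "M \<subseteq> M'" unfolding M'_def
    proof
      fix p assume "p \<in> M"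
      then show "p \<in> {(fst p + t *\<^sub>R y, snd p + t * c) | p t. p \<in> M}"
        by (intro CollectI exI[of _ p] exI[of _ 0]) simp
    qed
    then have MM: "M' = M" using Mmax[of M'] gM' unfolding A_def by simp
    have "(y, c) \<in> M'" unfolding M'_def
      using z by (intro CollectI exI[of _ "(0,0)"] exI[of _ 1]) simp
    then have "(y, c) \<in> M" by (simp only: MM)
    then show False using nv by auto
  qed
  define f where "f y = (THE a. (y, a) \<in> M)" for y
  have fM: "(y, f y) \<in> M" for y
  proof -
    obtain a where a: "(y, a) \<in> M" using total[of y] by (elim exE)
    have "\<exists>!a. (y, a) \<in> M" using a by (rule ex1I) (rule hb_fun[OF gM _ a])
    then show ?thesis unfolding f_def by (rule theI')
  qed
  have fadd: "f (x + y) = f x + f y" for x y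
    using hb_fun[OF gM fM[of "x + y"] hb_add[OF gM fM[of x] fM[of y]]] .
  have fscale: "f (r *\<^sub>R x) = r *\<^sub>R f x" for r x
    using hb_fun[OF gM fM[of "r *\<^sub>R x"] hb_scale[OF gM fM[of x]]] by simp
  have fbound: "norm (f x) \<le> norm x * 1" for x
  proof -
    have "f x \<le> norm x" using hb_dom[OF gM fM] .
    moreover have "(-1) * f x \<le> norm ((-1) *\<^sub>R x)" using hb_dom[OF gM hb_scale[OF gM fM[of x]]] .
    ultimately show ?thesis by simp
  qed
  have bl: "bounded_linear f" by (rule bounded_linear_intro[OF fadd fscale fbound])
  have fx0: "f x0 = norm x0" using hb_fun[OF gM fM[of x0] hb_x0[OF gM]] .
  show ?thesis
  proof (intro exI conjI)
    show "norm (Blinfun f) \<le> 1"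
      by (rule norm_blinfun_bound) (use fbound in \<open>simp_all add: bounded_linear_Blinfun_apply[OF bl]\<close>)
    show "blinfun_apply (Blinfun f) x0 = norm x0" by (simp add: bounded_linear_Blinfun_apply[OF bl] fx0)
  qed
qed


lemma baire_complete:
  fixes F :: "nat \<Rightarrow> 'b::banach set"
  assumes cl: "\<And>n. closed (F n)" and cov: "\<And>x. \<exists>n. x \<in> F n"
  shows "\<exists>n x r. r > 0 \<and> ball x r \<subseteq> F n"
proof (rule ccontr)
  assume H: "\<not> (\<exists>n x r. r > 0 \<and> ball x r \<subseteq> F n)"
  have int0: "interior (F n) = {}" for n
  proof -
    have "y \<notin> interior (F n)" for y
    proof
      assume "y \<in> interior (F n)"
      then obtain r where "r > 0" "ball y r \<subseteq> F n" by (meson mem_interior)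
      then show False using H by blast
    qed
    then show ?thesis by blast
  qed
  have "euclidean interior_of \<Union>(range F) = {}"
  proof (rule Baire_category_alt)
    show "completely_metrizable_space (euclidean :: 'b topology) \<or>
          locally_compact_space (euclidean :: 'b topology) \<and> regular_space (euclidean :: 'b topology)"
      using completely_metrizable_space_euclidean by blast
    show "countable (range F)" by simp
    fix T assume "T \<in> range F"
    then obtain n where "T = F n" by blast
    then show "closedin euclidean T \<and> euclidean interior_of T = {}"
      using cl int0 by (simp add: closed_closedin[symmetric])
  qed
  moreover have "\<Union>(range F) = UNIV" using cov by blast
  ultimately show False by simp
qed

lemma cscale_real: "cscale (complex_of_real r) x = r *\<^sub>R x"
  by (cases x) (simp add: cscale_def)

lemma cscale_add: "cscale c (x + y) = cscale c x + cscale c y"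
  by (cases x, cases y) (simp add: cscale_def algebra_simps)

lemma cscale_scaleR: "cscale c (r *\<^sub>R x) = r *\<^sub>R cscale c x"
  by (cases x) (simp add: cscale_def algebra_simps)

lemma cscale_diff: "cscale c (x - y) = cscale c x - cscale c y"
  by (cases x, cases y) (simp add: cscale_def algebra_simps)

lemma cscale_zero: "cscale c 0 = 0"
  by (simp add: cscale_def zero_prod_def)

lemma cscale_i: "cscale \<i> (a, b) = (-b, a)"
  by (simp add: cscale_def)

locale opctx =
  fixes D :: "('a::banach_lattice \<times> 'a) set" and A :: "'a \<times> 'a \<Rightarrow> 'a \<times> 'a"
  assumes lin: "lin_op D A" and rop: "real_op D A"
begin

lemma D0: "0 \<in> D" using lin unfolding lin_op_def by blast
lemma Dadd: "x \<in> D \<Longrightarrow> y \<in> D \<Longrightarrow> x + y \<in> D" using lin unfolding lin_op_def by blast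
lemma Aadd: "x \<in> D \<Longrightarrow> y \<in> D \<Longrightarrow> A (x + y) = A x + A y" using lin unfolding lin_op_def by blast
lemma Dcs: "x \<in> D \<Longrightarrow> cscale c x \<in> D" using lin unfolding lin_op_def by blast
lemma Acs: "x \<in> D \<Longrightarrow> A (cscale c x) = cscale c (A x)" using lin unfolding lin_op_def by blast
lemma Dsc: "x \<in> D \<Longrightarrow> r *\<^sub>R x \<in> D" using Dcs[of x "complex_of_real r"] by (simp add: cscale_real)
lemma Asc: "x \<in> D \<Longrightarrow> A (r *\<^sub>R x) = r *\<^sub>R A x" using Acs[of x "complex_of_real r"] by (simp add: cscale_real)

definition R :: "real \<Rightarrow> 'a \<times> 'a \<Rightarrow> 'a \<times> 'a" where
  "R \<mu> = resolvent (complex_of_real \<mu>) D A"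

definition inrho :: "real \<Rightarrow> bool" where
  "inrho \<mu> \<longleftrightarrow> complex_of_real \<mu> \<in> resolvent_set D A"

lemma res_eq: "inrho \<mu> \<Longrightarrow> x \<in> D \<Longrightarrow> \<mu> *\<^sub>R x - A x = y \<Longrightarrow> R \<mu> y = x"
proof -
  assume rho: "inrho \<mu>" and xD: "x \<in> D" and xy: "\<mu> *\<^sub>R x - A x = y"
  have inj: "inj_on (\<lambda>x. cscale (complex_of_real \<mu>) x - A x) D"
    using rho unfolding inrho_def resolvent_set_def bij_betw_def by blast
  show "R \<mu> y = x" unfolding R_def resolvent_def
  proof (rule the_equality)
    show "x \<in> D \<and> cscale (complex_of_real \<mu>) x - A x = y" using xD xy by (simp add: cscale_real)
    fix z assume "z \<in> D \<and> cscale (complex_of_real \<mu>) z - A z = y"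
    then show "z = x" using inj xD xy unfolding inj_on_def by (simp add: cscale_real)
  qed
qed

lemma res_in: assumes "inrho \<mu>" shows "R \<mu> y \<in> D \<and> \<mu> *\<^sub>R R \<mu> y - A (R \<mu> y) = y"
proof -
  have "(\<lambda>x. cscale (complex_of_real \<mu>) x - A x) ` D = UNIV"
    using assms unfolding inrho_def resolvent_set_def bij_betw_def by blast
  then obtain x where x: "x \<in> D" "cscale (complex_of_real \<mu>) x - A x = y"
    by (metis (no_types, lifting) UNIV_I imageE)
  then have xy: "\<mu> *\<^sub>R x - A x = y" by (simp add: cscale_real)
  have "R \<mu> y = x" using res_eq[OF assms x(1) xy] .
  then show ?thesis using x(1) xy by simp
qed

lemma res_D: "inrho \<mu> \<Longrightarrow> R \<mu> y \<in> D" using res_in by blast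
lemma res_eqn: "inrho \<mu> \<Longrightarrow> \<mu> *\<^sub>R R \<mu> y - A (R \<mu> y) = y" using res_in by blast
lemma res_A: "inrho \<mu> \<Longrightarrow> A (R \<mu> y) = \<mu> *\<^sub>R R \<mu> y - y"
  using res_eqn[of \<mu> y] by (simp add: algebra_simps)

lemma res_bound: "inrho \<mu> \<Longrightarrow> \<exists>K\<ge>0. \<forall>y. norm (R \<mu> y) \<le> K * norm y"
proof -
  assume "inrho \<mu>"
  then obtain K where K: "\<And>y. norm (R \<mu> y) \<le> K * norm y"
    unfolding inrho_def resolvent_set_def R_def by blast
  have "norm (R \<mu> y) \<le> max K 0 * norm y" for y
    using K[of y] by (meson max.cobounded1 mult_right_mono norm_ge_zero order_trans)
  then show ?thesis by (intro exI[of _ "max K 0"]) simp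
qed

lemma res_add: assumes "inrho \<mu>" shows "R \<mu> (y1 + y2) = R \<mu> y1 + R \<mu> y2"
proof (rule res_eq[OF assms])
  show "R \<mu> y1 + R \<mu> y2 \<in> D" using res_D[OF assms] by (intro Dadd)
  have "\<mu> *\<^sub>R (R \<mu> y1 + R \<mu> y2) - A (R \<mu> y1 + R \<mu> y2)
      = (\<mu> *\<^sub>R R \<mu> y1 - A (R \<mu> y1)) + (\<mu> *\<^sub>R R \<mu> y2 - A (R \<mu> y2))"
    using Aadd[OF res_D[OF assms] res_D[OF assms]] by (simp add: algebra_simps)
  also have "\<dots> = y1 + y2" using res_eqn[OF assms] by simp
  finally show "\<mu> *\<^sub>R (R \<mu> y1 + R \<mu> y2) - A (R \<mu> y1 + R \<mu> y2) = y1 + y2" .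
qed

lemma res_scaleR: assumes "inrho \<mu>" shows "R \<mu> (r *\<^sub>R y) = r *\<^sub>R R \<mu> y"
proof (rule res_eq[OF assms])
  show "r *\<^sub>R R \<mu> y \<in> D" using res_D[OF assms] by (intro Dsc)
  have "\<mu> *\<^sub>R (r *\<^sub>R R \<mu> y) - A (r *\<^sub>R R \<mu> y) = r *\<^sub>R (\<mu> *\<^sub>R R \<mu> y - A (R \<mu> y))"
    using Asc[OF res_D[OF assms]] by (simp add: algebra_simps)
  also have "\<dots> = r *\<^sub>R y" using res_eqn[OF assms] by simp
  finally show "\<mu> *\<^sub>R (r *\<^sub>R R \<mu> y) - A (r *\<^sub>R R \<mu> y) = r *\<^sub>R y" .
qed

lemma res_cscale: assumes "inrho \<mu>" shows "R \<mu> (cscale c y) = cscale c (R \<mu> y)"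
proof (rule res_eq[OF assms])
  show "cscale c (R \<mu> y) \<in> D" using res_D[OF assms] by (intro Dcs)
  have "\<mu> *\<^sub>R (cscale c (R \<mu> y)) - A (cscale c (R \<mu> y)) = cscale c (\<mu> *\<^sub>R R \<mu> y - A (R \<mu> y))"
    using Acs[OF res_D[OF assms]] by (simp add: cscale_diff cscale_scaleR)
  also have "\<dots> = cscale c y" using res_eqn[OF assms] by simp
  finally show "\<mu> *\<^sub>R (cscale c (R \<mu> y)) - A (cscale c (R \<mu> y)) = cscale c y" .
qed

lemma res_zero: "inrho \<mu> \<Longrightarrow> R \<mu> 0 = 0"
  using res_scaleR[of \<mu> 0 0] by simp

lemma res_diff: "inrho \<mu> \<Longrightarrow> R \<mu> (y1 - y2) = R \<mu> y1 - R \<mu> y2"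
  using res_add[of \<mu> y1 "(-1) *\<^sub>R y2"] res_scaleR[of \<mu> "-1" y2] by simp

lemma res_bl: "inrho \<mu> \<Longrightarrow> bounded_linear (R \<mu>)"
proof -
  assume a: "inrho \<mu>"
  obtain K where "K \<ge> 0" "\<And>y. norm (R \<mu> y) \<le> K * norm y" using res_bound[OF a] by blast
  then show ?thesis
    by (intro bounded_linear_intro[of _ K] res_add[OF a] res_scaleR[OF a]) (simp add: mult.commute)
qed

lemma res_real: assumes "inrho \<mu>" shows "snd (R \<mu> (f, 0)) = 0"
proof -
  let ?x = "R \<mu> (f, 0)"
  let ?L = "\<lambda>x. \<mu> *\<^sub>R x - A x"
  have xD: "?x \<in> D" by (rule res_D[OF assms])
  have Deq: "D = {p + cscale \<i> q | p q. p \<in> D \<inter> realpart \<and> q \<in> D \<inter> realpart}"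
    and Ar: "\<forall>x \<in> D \<inter> realpart. A x \<in> realpart" using rop unfolding real_op_def by blast+
  obtain p q where pq: "?x = p + cscale \<i> q" "p \<in> D" "p \<in> realpart" "q \<in> D" "q \<in> realpart"
    using xD Deq by blast
  have Apq: "A p \<in> realpart" "A q \<in> realpart" using Ar pq by blast+
  have sp: "snd p = 0" "snd q = 0" "snd (A p) = 0" "snd (A q) = 0"
    using pq Apq unfolding realpart_def by auto
  have "?L ?x = ?L p + cscale \<i> (?L q)"
    unfolding pq(1) using Aadd[OF pq(2) Dcs[OF pq(4)]] Acs[OF pq(4)]
    by (simp add: cscale_diff cscale_scaleR algebra_simps)
  moreover have "?L ?x = (f, 0)" by (rule res_eqn[OF assms])
  ultimately have "(f, 0) = ?L p + cscale \<i> (?L q)" by simp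
  then have "snd (?L p + cscale \<i> (?L q)) = 0" by (metis snd_conv)
  moreover have "snd (?L p) = 0" using sp by simp
  moreover have "snd (cscale \<i> (?L q)) = fst (?L q)" by (simp add: cscale_def)
  ultimately have "fst (?L q) = 0" by simp
  moreover have "snd (?L q) = 0" using sp by simp
  ultimately have "?L q = 0" by (simp add: prod_eq_iff)
  then have "q = R \<mu> 0" using res_eq[OF assms pq(4)] by simp
  then have "q = 0" using res_zero[OF assms] by simp
  then have "?x = p" using pq(1) by (simp add: cscale_zero)
  then show ?thesis using sp by simp
qed

lemma res_identity:
  assumes l: "inrho la" and m: "inrho \<mu>"
  shows "R la y = R \<mu> y + (\<mu> - la) *\<^sub>R R la (R \<mu> y)"
proof (rule res_eq[OF l])
  let ?a = "R \<mu> y" let ?b = "R la (R \<mu> y)"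
  have aD: "?a \<in> D" and bD: "?b \<in> D" using res_D l m by blast+
  show "?a + (\<mu> - la) *\<^sub>R ?b \<in> D" using aD bD by (intro Dadd Dsc)
  have "A (?a + (\<mu> - la) *\<^sub>R ?b) = A ?a + (\<mu> - la) *\<^sub>R A ?b"
    using Aadd[OF aD Dsc[OF bD]] Asc[OF bD] by simp
  also have "\<dots> = (\<mu> *\<^sub>R ?a - y) + (\<mu> - la) *\<^sub>R (la *\<^sub>R ?b - ?a)"
    using res_A[OF m, of y] res_A[OF l, of ?a] by simp
  finally have "A (?a + (\<mu> - la) *\<^sub>R ?b) = (\<mu> *\<^sub>R ?a - y) + (\<mu> - la) *\<^sub>R (la *\<^sub>R ?b - ?a)" .
  then show "la *\<^sub>R (?a + (\<mu> - la) *\<^sub>R ?b) - A (?a + (\<mu> - la) *\<^sub>R ?b) = y"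
    by (simp add: algebra_simps)
qed

end


definition cpx :: "('a::real_normed_vector \<Rightarrow>\<^sub>L real) \<Rightarrow> 'a \<times> 'a \<Rightarrow> complex" where
  "cpx \<psi> p = Complex (blinfun_apply \<psi> (fst p)) (blinfun_apply \<psi> (snd p))"

lemma cpx_add: "cpx \<psi> (p + q) = cpx \<psi> p + cpx \<psi> q"
  by (simp add: cpx_def complex_eq_iff blinfun.add_right)

lemma cpx_cscale: "cpx \<psi> (cscale c p) = c * cpx \<psi> p"
  by (cases p) (simp add: cpx_def cscale_def complex_eq_iff blinfun.diff_right blinfun.add_right blinfun.scaleR_right)

lemma cpx_cont: "continuous_on UNIV (cpx \<psi>)"
  unfolding cpx_def Complex_eq by (intro continuous_intros)

lemma cpx_dual: "cpx \<psi> \<in> (cdual :: ('a::banach_lattice \<times> 'a \<Rightarrow> complex) set)"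
  unfolding cdual_def using cpx_cont cpx_add cpx_cscale by blast

lemma cpx_bound: "cmod (cpx \<psi> p) \<le> norm \<psi> * (norm (fst p) + norm (snd p))"
proof -
  have "cmod (cpx \<psi> p) \<le> \<bar>blinfun_apply \<psi> (fst p)\<bar> + \<bar>blinfun_apply \<psi> (snd p)\<bar>"
    using cmod_le[of "cpx \<psi> p"] by (simp add: cpx_def)
  also have "\<dots> \<le> norm \<psi> * norm (fst p) + norm \<psi> * norm (snd p)"
    using norm_blinfun[of \<psi> "fst p"] norm_blinfun[of \<psi> "snd p"] by simp
  finally show ?thesis by (simp add: distrib_left)
qed

lemma cpx_real: "cpx \<psi> (x, 0) = complex_of_real (blinfun_apply \<psi> x)"
  by (simp add: cpx_def complex_eq_iff)

lemma dual_scaleR: "\<Psi> \<in> cdual \<Longrightarrow> \<Psi> (r *\<^sub>R p) = complex_of_real r * \<Psi> p"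
  unfolding cdual_def using cscale_real by (metis (mono_tags, lifting) mem_Collect_eq)

lemma dual_cscale: "\<Psi> \<in> cdual \<Longrightarrow> \<Psi> (cscale c p) = c * \<Psi> p"
  unfolding cdual_def by blast

lemma dual_add: "\<Psi> \<in> cdual \<Longrightarrow> \<Psi> (p + q) = \<Psi> p + \<Psi> q"
  unfolding cdual_def by blast

lemma dual_diff: "\<Psi> \<in> cdual \<Longrightarrow> \<Psi> (p - q) = \<Psi> p - \<Psi> q"
  using dual_add[of \<Psi> "p - q" q] by (simp add: algebra_simps)

context opctx
begin

definition rr :: "real \<Rightarrow> 'a \<Rightarrow> 'a" where "rr \<mu> f = fst (R \<mu> (f, 0))"

lemma R_real: "inrho \<mu> \<Longrightarrow> R \<mu> (f, 0) = (rr \<mu> f, 0)"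
  using res_real[of \<mu> f] unfolding rr_def by (simp add: prod_eq_iff)

lemma rr_add: "inrho \<mu> \<Longrightarrow> rr \<mu> (f + g) = rr \<mu> f + rr \<mu> g"
  unfolding rr_def using res_add[of \<mu> "(f,0)" "(g,0)"] by simp

lemma rr_scaleR: "inrho \<mu> \<Longrightarrow> rr \<mu> (r *\<^sub>R f) = r *\<^sub>R rr \<mu> f"
  unfolding rr_def using res_scaleR[of \<mu> r "(f,0)"] by simp

lemma rr_zero: "inrho \<mu> \<Longrightarrow> rr \<mu> 0 = 0"
  using rr_scaleR[of \<mu> 0 0] by simp

lemma rr_diff: "inrho \<mu> \<Longrightarrow> rr \<mu> (f - g) = rr \<mu> f - rr \<mu> g"
  using rr_add[of \<mu> f "(-1) *\<^sub>R g"] rr_scaleR[of \<mu> "-1" g] by simp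

lemma rr_bl: assumes "inrho \<mu>" shows "bounded_linear (rr \<mu>)"
proof -
  obtain K where K: "K \<ge> 0" "\<And>y. norm (R \<mu> y) \<le> K * norm y" using res_bound[OF assms] by blast
  have "norm (rr \<mu> f) \<le> norm f * K" for f
  proof -
    have "norm (rr \<mu> f) \<le> norm (R \<mu> (f, 0))" unfolding R_real[OF assms] by (rule norm_fst_le)
    also have "\<dots> \<le> K * norm (f, 0)" using K(2)[of "(f, 0)"] by simp
    finally show ?thesis by (simp add: mult.commute)
  qed
  then show ?thesis by (intro bounded_linear_intro rr_add[OF assms] rr_scaleR[OF assms])
qed

lemma rr_identity:
  assumes l: "inrho la" and m: "inrho \<mu>"
  shows "rr la f = rr \<mu> f + (\<mu> - la) *\<^sub>R rr la (rr \<mu> f)"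
proof -
  have "R la (f, 0) = R \<mu> (f, 0) + (\<mu> - la) *\<^sub>R R la (R \<mu> (f, 0))" by (rule res_identity[OF l m])
  then show ?thesis unfolding R_real[OF m] R_real[OF l] by simp
qed

lemma U_bound:
  assumes l: "inrho la" and u0: "0 \<le> u" and Du: "D \<subseteq> pideal u"
  shows "\<exists>C\<ge>0. \<forall>g. labs (rr la g) \<le> (C * norm g) *\<^sub>R u"
proof -
  let ?r = "rr la"
  have cont: "continuous_on UNIV ?r" by (rule linear_continuous_on[OF rr_bl[OF l]])
  define F where "F n = {g. labs (?r g) \<le> real n *\<^sub>R u}" for n :: nat
  have F_eq: "F n = {g. ?r g \<le> real n *\<^sub>R u} \<inter> {g. - ?r g \<le> real n *\<^sub>R u}" for n
    unfolding F_def labs_le_iff by blast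
  have clF: "closed (F n)" for n
    unfolding F_eq
    by (intro closed_Int closed_le_fun cont continuous_on_minus continuous_on_const)
  have cov: "\<exists>n. g \<in> F n" for g
  proof -
    have "R la (g, 0) \<in> pideal u" using res_D[OF l] Du by blast
    then obtain c where c: "c \<ge> 0" "lmod (R la (g, 0)) \<le> c *\<^sub>R u" unfolding pideal_def by blast
    have "labs (?r g) \<le> c *\<^sub>R u" using c(2) unfolding R_real[OF l] lmod_real by simp
    also have "\<dots> \<le> real (nat \<lceil>c\<rceil>) *\<^sub>R u" using u0 by (intro scaleR_right_mono) linarith
    finally show ?thesis unfolding F_def by blast
  qed
  obtain n g0 \<rho> where \<rho>: "\<rho> > 0" "ball g0 \<rho> \<subseteq> F n" using baire_complete[OF clF cov] by blast
  have small: "labs (?r h) \<le> (2 * real n) *\<^sub>R u" if h: "norm h < \<rho>" for h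
  proof -
    have "g0 + h \<in> ball g0 \<rho>" using h by (simp add: dist_norm)
    then have a1: "labs (?r (g0 + h)) \<le> real n *\<^sub>R u" using \<rho>(2) unfolding F_def by blast
    have "g0 \<in> ball g0 \<rho>" using \<rho>(1) by simp
    then have a2: "labs (?r g0) \<le> real n *\<^sub>R u" using \<rho>(2) unfolding F_def by blast
    have "?r h = ?r (g0 + h) + (- ?r g0)" using rr_add[OF l, of g0 h] by simp
    then have "labs (?r h) \<le> labs (?r (g0 + h)) + labs (- ?r g0)" using labs_triangle by metis
    also have "\<dots> \<le> real n *\<^sub>R u + real n *\<^sub>R u" unfolding labs_neg using a1 a2 by (rule add_mono)
    also have "\<dots> = (2 * real n) *\<^sub>R u" by (simp add: scaleR_add_left[symmetric])
    finally show ?thesis .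
  qed
  show ?thesis
  proof (intro exI[of _ "4 * real n / \<rho>"] conjI allI)
    show "0 \<le> 4 * real n / \<rho>" using \<rho>(1) by simp
    fix g
    show "labs (?r g) \<le> (4 * real n / \<rho> * norm g) *\<^sub>R u"
    proof (cases "g = 0")
      case True
      then show ?thesis by (simp add: rr_zero[OF l] labs_zero)
    next
      case False
      define k where "k = \<rho> / (2 * norm g)"
      have k0: "k > 0" using False \<rho>(1) unfolding k_def by simp
      have "norm (k *\<^sub>R g) = \<rho> / 2" using False \<rho>(1) unfolding k_def by simp
      then have "norm (k *\<^sub>R g) < \<rho>" using \<rho>(1) by simp
      then have "labs (?r (k *\<^sub>R g)) \<le> (2 * real n) *\<^sub>R u" by (rule small)
      then have "k *\<^sub>R labs (?r g) \<le> (2 * real n) *\<^sub>R u"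
        using k0 by (simp add: rr_scaleR[OF l] labs_scaleR)
      then have "(1/k) *\<^sub>R (k *\<^sub>R labs (?r g)) \<le> (1/k) *\<^sub>R ((2 * real n) *\<^sub>R u)"
        using k0 by (intro scaleR_left_mono) auto
      then have "labs (?r g) \<le> ((1/k) * (2 * real n)) *\<^sub>R u" using k0 by simp
      also have "(1/k) * (2 * real n) = 4 * real n / \<rho> * norm g"
        using False \<rho>(1) unfolding k_def by (simp add: field_simps)
      finally show ?thesis .
    qed
  qed
qed

lemma comp_adj:
  assumes b: "inrho b" and \<Psi>: "\<Psi> \<in> cdual"
  shows "(\<lambda>p. \<Psi> (R b p)) \<in> adj_dom D A"
proof -
  have \<Psi>c: "continuous_on UNIV \<Psi>" using \<Psi> unfolding cdual_def by blast
  have Rc: "continuous_on UNIV (R b)" by (rule linear_continuous_on[OF res_bl[OF b]])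
  have Fc: "continuous_on UNIV (\<lambda>p. \<Psi> (R b p))"
    by (rule continuous_on_compose2[OF \<Psi>c Rc]) auto
  have Fd: "(\<lambda>p. \<Psi> (R b p)) \<in> cdual" unfolding cdual_def
  proof (intro CollectI conjI allI Fc)
    fix x y show "\<Psi> (R b (x + y)) = \<Psi> (R b x) + \<Psi> (R b y)"
      by (simp add: res_add[OF b] dual_add[OF \<Psi>])
  next
    fix c x show "\<Psi> (R b (cscale c x)) = c * \<Psi> (R b x)"
      by (simp add: res_cscale[OF b] dual_cscale[OF \<Psi>])
  qed
  define G where "G p = complex_of_real b * \<Psi> (R b p) - \<Psi> p" for p
  have Gd: "G \<in> cdual" unfolding cdual_def
  proof (intro CollectI conjI allI)
    show "continuous_on UNIV G" unfolding G_def by (intro continuous_intros Fc \<Psi>c)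
  next
    fix x y show "G (x + y) = G x + G y"
      unfolding G_def by (simp add: res_add[OF b] dual_add[OF \<Psi>] algebra_simps)
  next
    fix c x
    show "G (cscale c x) = c * G x"
      unfolding G_def by (simp add: res_cscale[OF b] dual_cscale[OF \<Psi>] algebra_simps)
  qed
  have "\<Psi> (R b (A x)) = G x" if xD: "x \<in> D" for x
  proof -
    have "A x = b *\<^sub>R x - (b *\<^sub>R x - A x)" by simp
    then have "R b (A x) = b *\<^sub>R R b x - R b (b *\<^sub>R x - A x)"
      by (metis res_diff[OF b] res_scaleR[OF b])
    also have "R b (b *\<^sub>R x - A x) = x" by (rule res_eq[OF b xD refl])
    finally have "R b (A x) = b *\<^sub>R R b x - x" .
    then show ?thesis unfolding G_def by (simp add: dual_diff[OF \<Psi>] dual_scaleR[OF \<Psi>])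
  qed
  then show ?thesis unfolding adj_dom_def using Fd Gd \<Psi> by blast
qed

end


context opctx
begin

lemma Phi_bound:
  assumes b: "inrho b" and adj: "adj_dom D A \<subseteq> dual_pideal \<phi>" and pf: "pos_functional \<phi>"
  shows "\<exists>C\<ge>0. \<forall>f. 0 \<le> f \<longrightarrow> norm (rr b f) \<le> C * Re (\<phi> (f, 0))"
proof -
  obtain K where K: "K \<ge> 0" "\<And>y. norm (R b y) \<le> K * norm y" using res_bound[OF b] by blast
  have phipos: "0 \<le> Re (\<phi> (f, 0))" if "0 \<le> f" for f
    using pf that unfolding pos_functional_def poscone_def by blast
  define G where "G n = (\<Inter>f\<in>{f. 0 \<le> f}. {\<psi>::'a \<Rightarrow>\<^sub>L real. \<bar>blinfun_apply \<psi> (rr b f)\<bar> \<le> real n * Re (\<phi> (f, 0))})" for n :: nat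
  have clG: "closed (G n)" for n
    unfolding G_def
    by (intro closed_INT ballI closed_Collect_le continuous_intros)
  have cov: "\<exists>n. \<psi> \<in> G n" for \<psi>
  proof -
    let ?F = "\<lambda>p. cpx \<psi> (R b p)"
    have "?F \<in> adj_dom D A" by (rule comp_adj[OF b cpx_dual])
    then have "?F \<in> dual_pideal \<phi>" using adj by blast
    then obtain c where c: "c \<ge> 0" "\<And>x. 0 \<le> x \<Longrightarrow> dmod ?F x \<le> c * Re (\<phi> (x, 0))"
      unfolding dual_pideal_def by blast
    have "\<bar>blinfun_apply \<psi> (rr b f)\<bar> \<le> real (nat \<lceil>c\<rceil>) * Re (\<phi> (f, 0))" if f0: "0 \<le> f" for f
    proof -
      have "\<bar>blinfun_apply \<psi> (rr b f)\<bar> = cmod (?F (f, 0))"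
        unfolding R_real[OF b] cpx_real by simp
      also have "\<dots> \<le> dmod ?F f" unfolding dmod_def
      proof (rule cSup_upper)
        show "cmod (?F (f, 0)) \<in> {cmod (?F w) |w. lmod w \<le> f}"
          using f0 by (intro CollectI exI[of _ "(f, 0)"]) (simp add: lmod_real labs_pos)
        have "cmod (?F w) \<le> norm \<psi> * (2 * (K * (2 * norm f)))" if w: "lmod w \<le> f" for w
        proof -
          have n1: "norm (fst w) \<le> norm f"
            by (rule norm_le_of_labs) (rule order_trans[OF lmod_fst w])
          have n2: "norm (snd w) \<le> norm f"
            by (rule norm_le_of_labs) (rule order_trans[OF lmod_snd w])
          have "norm w \<le> norm (fst w) + norm (snd w)"
            using norm_Pair_le[of "fst w" "snd w"] by simp
          also have "\<dots> \<le> 2 * norm f" using n1 n2 by simp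
          finally have nw: "norm w \<le> 2 * norm f" .
          have nR: "norm (R b w) \<le> K * (2 * norm f)"
            using K(2)[of w] mult_left_mono[OF nw K(1)] by linarith
          have "norm (fst (R b w)) + norm (snd (R b w)) \<le> 2 * norm (R b w)"
            using norm_fst_le[of "fst (R b w)" "snd (R b w)"] norm_snd_le[of "snd (R b w)" "fst (R b w)"]
            by simp
          also have "\<dots> \<le> 2 * (K * (2 * norm f))" using nR by simp
          finally have "norm (fst (R b w)) + norm (snd (R b w)) \<le> 2 * (K * (2 * norm f))" .
          then have "norm \<psi> * (norm (fst (R b w)) + norm (snd (R b w))) \<le> norm \<psi> * (2 * (K * (2 * norm f)))"
            by (rule mult_left_mono) simp
          then show ?thesis using cpx_bound[of \<psi> "R b w"] by linarith
        qed
        then show "bdd_above {cmod (?F w) |w. lmod w \<le> f}"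
          unfolding bdd_above_def by blast
      qed
      also have "\<dots> \<le> c * Re (\<phi> (f, 0))" by (rule c(2)[OF f0])
      also have "\<dots> \<le> real (nat \<lceil>c\<rceil>) * Re (\<phi> (f, 0))"
        using phipos[OF f0] by (intro mult_right_mono) linarith+
      finally show ?thesis .
    qed
    then show ?thesis unfolding G_def by blast
  qed
  obtain n \<psi>0 \<rho> where \<rho>: "\<rho> > 0" "ball \<psi>0 \<rho> \<subseteq> G n" using baire_complete[OF clG cov] by blast
  show ?thesis
  proof (intro exI[of _ "4 * real n / \<rho>"] conjI allI impI)
    show "0 \<le> 4 * real n / \<rho>" using \<rho>(1) by simp
    fix f :: 'a assume f0: "0 \<le> f"
    let ?v = "rr b f"
    obtain \<psi>1 :: "'a \<Rightarrow>\<^sub>L real" where \<psi>1: "norm \<psi>1 \<le> 1" "blinfun_apply \<psi>1 ?v = norm ?v"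
      using hahn_banach_norming by blast
    define ch where "ch = (\<rho>/2) *\<^sub>R \<psi>1"
    have "norm ch \<le> \<rho>/2" unfolding ch_def using \<psi>1(1) \<rho>(1) by (simp add: mult_left_le)
    then have "\<psi>0 + ch \<in> ball \<psi>0 \<rho>" using \<rho>(1) by (simp add: dist_norm)
    then have a1: "\<bar>blinfun_apply (\<psi>0 + ch) ?v\<bar> \<le> real n * Re (\<phi> (f, 0))"
      using \<rho>(2) f0 unfolding G_def by blast
    have "\<psi>0 \<in> ball \<psi>0 \<rho>" using \<rho>(1) by simp
    then have a2: "\<bar>blinfun_apply \<psi>0 ?v\<bar> \<le> real n * Re (\<phi> (f, 0))"
      using \<rho>(2) f0 unfolding G_def by blast
    have "blinfun_apply ch ?v = (\<rho>/2) * norm ?v" unfolding ch_def using \<psi>1(2) by (simp add: scaleR_blinfun.rep_eq)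
    moreover have "blinfun_apply (\<psi>0 + ch) ?v = blinfun_apply \<psi>0 ?v + blinfun_apply ch ?v"
      by (simp add: plus_blinfun.rep_eq)
    ultimately have "(\<rho>/2) * norm ?v \<le> 2 * real n * Re (\<phi> (f, 0))" using a1 a2 by linarith
    then show "norm ?v \<le> 4 * real n / \<rho> * Re (\<phi> (f, 0))" using \<rho>(1) by (simp add: field_simps)
  qed
qed

end


context opctx
begin

lemma tensor_real: "Im (\<phi> (f, 0)) = 0 \<Longrightarrow> tensor u \<phi> (f, 0) = (Re (\<phi> (f, 0)) *\<^sub>R u, 0)"
  by (simp add: tensor_def cscale_def)

lemma poscone_iff: "(a, b) \<in> poscone \<longleftrightarrow> b = 0 \<and> 0 \<le> a"
  by (auto simp: poscone_def)

lemma poscone_elem: "x \<in> poscone \<Longrightarrow> \<exists>f. x = (f, 0) \<and> 0 \<le> f"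
  by (auto simp: poscone_def)

lemma pf_im: "pos_functional \<phi> \<Longrightarrow> 0 \<le> f \<Longrightarrow> Im (\<phi> (f, 0)) = 0"
  unfolding pos_functional_def poscone_def by blast

lemma pf_re: "pos_functional \<phi> \<Longrightarrow> 0 \<le> f \<Longrightarrow> 0 \<le> Re (\<phi> (f, 0))"
  unfolding pos_functional_def poscone_def by blast

lemma succ_a:
  assumes m: "inrho \<mu>" and pf: "pos_functional \<phi>"
  shows "op_succeq (R \<mu>) (\<lambda>x. - tensor u \<phi> x) \<longleftrightarrow>
         (\<exists>c>0. \<forall>f. 0 \<le> f \<longrightarrow> 0 \<le> rr \<mu> f + (c * Re (\<phi> (f, 0))) *\<^sub>R u)"
proof -
  have key: "(R \<mu> (f, 0) - c *\<^sub>R (- tensor u \<phi> (f, 0)) \<in> poscone) \<longleftrightarrow>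
             0 \<le> rr \<mu> f + (c * Re (\<phi> (f, 0))) *\<^sub>R u" if "0 \<le> f" for f c
    using pf_im[OF pf that] by (simp add: R_real[OF m] tensor_real poscone_iff)
  show ?thesis unfolding op_succeq_def
  proof
    assume "\<exists>c>0. \<forall>x\<in>poscone. R \<mu> x - c *\<^sub>R (- tensor u \<phi> x) \<in> poscone"
    then obtain c where c: "c > 0" "\<forall>x\<in>poscone. R \<mu> x - c *\<^sub>R (- tensor u \<phi> x) \<in> poscone" by blast
    have "0 \<le> rr \<mu> f + (c * Re (\<phi> (f, 0))) *\<^sub>R u" if "0 \<le> f" for f
      using c(2) key[OF that, of c] that by (simp add: poscone_iff)
    then show "\<exists>c>0. \<forall>f. 0 \<le> f \<longrightarrow> 0 \<le> rr \<mu> f + (c * Re (\<phi> (f, 0))) *\<^sub>R u" using c(1) by blast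
  next
    assume "\<exists>c>0. \<forall>f. 0 \<le> f \<longrightarrow> 0 \<le> rr \<mu> f + (c * Re (\<phi> (f, 0))) *\<^sub>R u"
    then obtain c where c: "c > 0" "\<forall>f. 0 \<le> f \<longrightarrow> 0 \<le> rr \<mu> f + (c * Re (\<phi> (f, 0))) *\<^sub>R u" by blast
    have "R \<mu> x - c *\<^sub>R (- tensor u \<phi> x) \<in> poscone" if xp: "x \<in> poscone" for x
    proof -
      obtain f where f: "x = (f, 0)" "0 \<le> f" using poscone_elem[OF xp] by blast
      show ?thesis unfolding f(1) key[OF f(2)] using c(2) f(2) by blast
    qed
    then show "\<exists>c>0. \<forall>x\<in>poscone. R \<mu> x - c *\<^sub>R (- tensor u \<phi> x) \<in> poscone" using c(1) by blast
  qed
qed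

lemma succ_b:
  assumes m: "inrho \<mu>" and pf: "pos_functional \<phi>"
  shows "op_succeq (tensor u \<phi>) (R \<mu>) \<longleftrightarrow>
         (\<exists>c>0. \<forall>f. 0 \<le> f \<longrightarrow> 0 \<le> Re (\<phi> (f, 0)) *\<^sub>R u - c *\<^sub>R rr \<mu> f)"
proof -
  have key: "(tensor u \<phi> (f, 0) - c *\<^sub>R R \<mu> (f, 0) \<in> poscone) \<longleftrightarrow>
             0 \<le> Re (\<phi> (f, 0)) *\<^sub>R u - c *\<^sub>R rr \<mu> f" if "0 \<le> f" for f c
    using pf_im[OF pf that] by (simp add: R_real[OF m] tensor_real poscone_iff)
  show ?thesis unfolding op_succeq_def
  proof
    assume "\<exists>c>0. \<forall>x\<in>poscone. tensor u \<phi> x - c *\<^sub>R R \<mu> x \<in> poscone"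
    then obtain c where c: "c > 0" "\<forall>x\<in>poscone. tensor u \<phi> x - c *\<^sub>R R \<mu> x \<in> poscone" by blast
    have "0 \<le> Re (\<phi> (f, 0)) *\<^sub>R u - c *\<^sub>R rr \<mu> f" if "0 \<le> f" for f
      using c(2) key[OF that, of c] that by (simp add: poscone_iff)
    then show "\<exists>c>0. \<forall>f. 0 \<le> f \<longrightarrow> 0 \<le> Re (\<phi> (f, 0)) *\<^sub>R u - c *\<^sub>R rr \<mu> f" using c(1) by blast
  next
    assume "\<exists>c>0. \<forall>f. 0 \<le> f \<longrightarrow> 0 \<le> Re (\<phi> (f, 0)) *\<^sub>R u - c *\<^sub>R rr \<mu> f"
    then obtain c where c: "c > 0" "\<forall>f. 0 \<le> f \<longrightarrow> 0 \<le> Re (\<phi> (f, 0)) *\<^sub>R u - c *\<^sub>R rr \<mu> f" by blast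
    have "tensor u \<phi> x - c *\<^sub>R R \<mu> x \<in> poscone" if xp: "x \<in> poscone" for x
    proof -
      obtain f where f: "x = (f, 0)" "0 \<le> f" using poscone_elem[OF xp] by blast
      show ?thesis unfolding f(1) key[OF f(2)] using c(2) f(2) by blast
    qed
    then show "\<exists>c>0. \<forall>x\<in>poscone. tensor u \<phi> x - c *\<^sub>R R \<mu> x \<in> poscone" using c(1) by blast
  qed
qed

lemma dom_bound:
  assumes m0: "inrho \<mu>0" and l: "inrho la" and u0: "0 \<le> u" and Du: "D \<subseteq> pideal u"
    and adj: "adj_dom D A \<subseteq> dual_pideal \<phi>" and pf: "pos_functional \<phi>"
  shows "\<exists>M\<ge>0. \<forall>f. 0 \<le> f \<longrightarrow> labs (rr la (rr \<mu>0 f)) \<le> (M * Re (\<phi> (f, 0))) *\<^sub>R u"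
proof -
  obtain CU where CU: "CU \<ge> 0" "\<And>g. labs (rr la g) \<le> (CU * norm g) *\<^sub>R u"
    using U_bound[OF l u0 Du] by blast
  obtain CP where CP: "CP \<ge> 0" "\<And>f. 0 \<le> f \<Longrightarrow> norm (rr \<mu>0 f) \<le> CP * Re (\<phi> (f, 0))"
    using Phi_bound[OF m0 adj pf] by blast
  have "labs (rr la (rr \<mu>0 f)) \<le> ((CU * CP) * Re (\<phi> (f, 0))) *\<^sub>R u" if f0: "0 \<le> f" for f
  proof -
    have "labs (rr la (rr \<mu>0 f)) \<le> (CU * norm (rr \<mu>0 f)) *\<^sub>R u" by (rule CU(2))
    also have "\<dots> \<le> (CU * (CP * Re (\<phi> (f, 0)))) *\<^sub>R u"
      using CP(2)[OF f0] CU(1) u0 by (intro scaleR_right_mono mult_left_mono) auto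
    finally show ?thesis by (simp add: mult.assoc)
  qed
  then show ?thesis using CU(1) CP(1) by (intro exI[of _ "CU * CP"]) simp
qed

lemma main_a:
  assumes m0: "inrho \<mu>0" and l: "inrho la" and u0: "0 \<le> u" and Du: "D \<subseteq> pideal u"
    and adj: "adj_dom D A \<subseteq> dual_pideal \<phi>" and pf: "pos_functional \<phi>"
    and H: "\<exists>c>0. \<forall>f. 0 \<le> f \<longrightarrow> 0 \<le> rr \<mu>0 f + (c * Re (\<phi> (f, 0))) *\<^sub>R u"
  shows "\<exists>c>0. \<forall>f. 0 \<le> f \<longrightarrow> 0 \<le> rr la f + (c * Re (\<phi> (f, 0))) *\<^sub>R u"
proof -
  obtain c where c: "c > 0" "\<And>f. 0 \<le> f \<Longrightarrow> 0 \<le> rr \<mu>0 f + (c * Re (\<phi> (f, 0))) *\<^sub>R u" using H by blast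
  obtain M where M: "M \<ge> 0" "\<And>f. 0 \<le> f \<Longrightarrow> labs (rr la (rr \<mu>0 f)) \<le> (M * Re (\<phi> (f, 0))) *\<^sub>R u"
    using dom_bound[OF m0 l u0 Du adj pf] by blast
  define k where "k = \<mu>0 - la"
  define c' where "c' = c + \<bar>k\<bar> * M + 1"
  have c'0: "c' > 0" unfolding c'_def using c(1) M(1) by (simp add: add_pos_nonneg)
  have "0 \<le> rr la f + (c' * Re (\<phi> (f, 0))) *\<^sub>R u" if f0: "0 \<le> f" for f
  proof -
    define s where "s = Re (\<phi> (f, 0))"
    define r0 where "r0 = rr \<mu>0 f"
    define z where "z = rr la r0"
    have s0: "0 \<le> s" unfolding s_def by (rule pf_re[OF pf f0])
    have id: "rr la f = r0 + k *\<^sub>R z" unfolding r0_def z_def k_def by (rule rr_identity[OF l m0])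
    have A1: "0 \<le> r0 + (c * s) *\<^sub>R u" unfolding r0_def s_def by (rule c(2)[OF f0])
    have "- (\<bar>k\<bar> *\<^sub>R labs z) \<le> k *\<^sub>R z" by (rule scale_ge_labs)
    moreover have "\<bar>k\<bar> *\<^sub>R labs z \<le> \<bar>k\<bar> *\<^sub>R ((M * s) *\<^sub>R u)"
      using M(2)[OF f0] unfolding z_def r0_def s_def by (intro scaleR_left_mono) auto
    ultimately have h: "- ((\<bar>k\<bar> * M * s) *\<^sub>R u) \<le> k *\<^sub>R z"
      by (metis (no_types) mult.assoc neg_le_iff_le order_trans scaleR_scaleR)
    have A2: "0 \<le> k *\<^sub>R z + (\<bar>k\<bar> * M * s) *\<^sub>R u"
      using add_right_mono[OF h, of "(\<bar>k\<bar> * M * s) *\<^sub>R u"] by simp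
    have A3: "0 \<le> s *\<^sub>R u" using s0 u0 by (rule scaleR_nonneg_nonneg)
    have eq: "rr la f + (c' * s) *\<^sub>R u = (r0 + (c * s) *\<^sub>R u) + (k *\<^sub>R z + (\<bar>k\<bar> * M * s) *\<^sub>R u) + s *\<^sub>R u"
      unfolding id c'_def by (simp add: algebra_simps scaleR_add_left)
    have "0 \<le> (r0 + (c * s) *\<^sub>R u) + (k *\<^sub>R z + (\<bar>k\<bar> * M * s) *\<^sub>R u) + s *\<^sub>R u"
      using add_nonneg_nonneg[OF add_nonneg_nonneg[OF A1 A2] A3] .
    then show ?thesis using eq unfolding s_def by simp
  qed
  then show ?thesis using c'0 by blast
qed

end


context opctx
begin

lemma main_b:
  assumes m0: "inrho \<mu>0" and l: "inrho la" and u0: "0 \<le> u" and Du: "D \<subseteq> pideal u"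
    and adj: "adj_dom D A \<subseteq> dual_pideal \<phi>" and pf: "pos_functional \<phi>"
    and H: "\<exists>c>0. \<forall>f. 0 \<le> f \<longrightarrow> 0 \<le> Re (\<phi> (f, 0)) *\<^sub>R u - c *\<^sub>R rr \<mu>0 f"
  shows "\<exists>c>0. \<forall>f. 0 \<le> f \<longrightarrow> 0 \<le> Re (\<phi> (f, 0)) *\<^sub>R u - c *\<^sub>R rr la f"
proof -
  obtain c where c: "c > 0" "\<And>f. 0 \<le> f \<Longrightarrow> 0 \<le> Re (\<phi> (f, 0)) *\<^sub>R u - c *\<^sub>R rr \<mu>0 f" using H by blast
  obtain M where M: "M \<ge> 0" "\<And>f. 0 \<le> f \<Longrightarrow> labs (rr la (rr \<mu>0 f)) \<le> (M * Re (\<phi> (f, 0))) *\<^sub>R u"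
    using dom_bound[OF m0 l u0 Du adj pf] by blast
  define k where "k = \<mu>0 - la"
  define c' where "c' = 1 / (1/c + \<bar>k\<bar> * M)"
  have den: "1/c + \<bar>k\<bar> * M > 0" using c(1) M(1) by (simp add: add_pos_nonneg)
  have c'0: "c' > 0" unfolding c'_def using den by simp
  have "c'/c + c' * (\<bar>k\<bar> * M) = c' * (1/c + \<bar>k\<bar> * M)"
    by (simp add: algebra_simps divide_inverse)
  also have "\<dots> = 1" unfolding c'_def using den by simp
  finally have sc: "c'/c + c' * (\<bar>k\<bar> * M) = 1" .
  have "0 \<le> Re (\<phi> (f, 0)) *\<^sub>R u - c' *\<^sub>R rr la f" if f0: "0 \<le> f" for f
  proof -
    define s where "s = Re (\<phi> (f, 0))"
    define r0 where "r0 = rr \<mu>0 f"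
    define z where "z = rr la r0"
    have id: "rr la f = r0 + k *\<^sub>R z" unfolding r0_def z_def k_def by (rule rr_identity[OF l m0])
    have A1: "0 \<le> s *\<^sub>R u - c *\<^sub>R r0" unfolding r0_def s_def by (rule c(2)[OF f0])
    have "k *\<^sub>R z \<le> \<bar>k\<bar> *\<^sub>R labs z" by (rule scale_le_labs)
    also have "\<bar>k\<bar> *\<^sub>R labs z \<le> \<bar>k\<bar> *\<^sub>R ((M * s) *\<^sub>R u)"
      using M(2)[OF f0] unfolding z_def r0_def s_def by (intro scaleR_left_mono) auto
    finally have "k *\<^sub>R z \<le> (\<bar>k\<bar> * M * s) *\<^sub>R u" by (simp add: mult.assoc)
    then have A2: "0 \<le> (\<bar>k\<bar> * M * s) *\<^sub>R u - k *\<^sub>R z" by simp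
    have B: "0 \<le> (c'/c) *\<^sub>R (s *\<^sub>R u - c *\<^sub>R r0) + c' *\<^sub>R ((\<bar>k\<bar> * M * s) *\<^sub>R u - k *\<^sub>R z)"
      using c(1) c'0 A1 A2 by (intro add_nonneg_nonneg scaleR_nonneg_nonneg) auto
    have "(c'/c) *\<^sub>R (s *\<^sub>R u - c *\<^sub>R r0) + c' *\<^sub>R ((\<bar>k\<bar> * M * s) *\<^sub>R u - k *\<^sub>R z)
        = ((c'/c + c' * (\<bar>k\<bar> * M)) * s) *\<^sub>R u - c' *\<^sub>R (r0 + k *\<^sub>R z)"
      using c(1) by (simp add: algebra_simps scaleR_add_left)
    also have "\<dots> = s *\<^sub>R u - c' *\<^sub>R rr la f" unfolding sc id by simp
    finally show ?thesis using B unfolding s_def by simp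
  qed
  then show ?thesis using c'0 by blast
qed

end

theorem proposition4p7:
  fixes D :: "('a::banach_lattice \<times> 'a) set"
    and A :: "'a \<times> 'a \<Rightarrow> 'a \<times> 'a"
    and u :: 'a
    and \<phi> :: "'a \<times> 'a \<Rightarrow> complex"
    and \<mu>\<^sub>0 :: real
  assumes "lin_op D A"
    and "densely_defined D"
    and "closed_op D A"
    and "real_op D A"
    and "0 \<le> u"
    and "pos_functional \<phi>"
    and "strictly_pos \<phi>"
    and "D \<subseteq> pideal u"
    and "adj_dom D A \<subseteq> dual_pideal \<phi>"
    and "complex_of_real \<mu>\<^sub>0 \<in> resolvent_set D A"
  shows "(op_succeq (resolvent (complex_of_real \<mu>\<^sub>0) D A) (\<lambda>x. - tensor u \<phi> x) \<longleftrightarrow>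
           (\<forall>\<mu>::real. complex_of_real \<mu> \<in> resolvent_set D A \<longrightarrow>
              op_succeq (resolvent (complex_of_real \<mu>) D A) (\<lambda>x. - tensor u \<phi> x)))
       \<and> (op_succeq (tensor u \<phi>) (resolvent (complex_of_real \<mu>\<^sub>0) D A) \<longleftrightarrow>
           (\<forall>\<mu>::real. complex_of_real \<mu> \<in> resolvent_set D A \<longrightarrow>
              op_succeq (tensor u \<phi>) (resolvent (complex_of_real \<mu>) D A)))"
proof -
  interpret opctx D A using assms(1,4) by unfold_locales
  have eqR: "resolvent (complex_of_real \<mu>) D A = R \<mu>" for \<mu> by (simp add: R_def)
  have eqI: "complex_of_real \<mu> \<in> resolvent_set D A \<longleftrightarrow> inrho \<mu>" for \<mu> by (simp add: inrho_def)
  have m0: "inrho \<mu>\<^sub>0" using assms(10) eqI by simp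
  note hyps = assms(5) assms(8) assms(9) assms(6)
  show ?thesis unfolding eqR eqI
  proof (intro conjI iffI allI impI)
    fix \<mu> assume H: "op_succeq (R \<mu>\<^sub>0) (\<lambda>x. - tensor u \<phi> x)" and l: "inrho \<mu>"
    show "op_succeq (R \<mu>) (\<lambda>x. - tensor u \<phi> x)"
      using main_a[OF m0 l hyps] H succ_a[OF m0 assms(6)] succ_a[OF l assms(6)] by simp
  next
    assume "\<forall>\<mu>. inrho \<mu> \<longrightarrow> op_succeq (R \<mu>) (\<lambda>x. - tensor u \<phi> x)"
    then show "op_succeq (R \<mu>\<^sub>0) (\<lambda>x. - tensor u \<phi> x)" using m0 by blast
  next
    fix \<mu> assume H: "op_succeq (tensor u \<phi>) (R \<mu>\<^sub>0)" and l: "inrho \<mu>"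
    show "op_succeq (tensor u \<phi>) (R \<mu>)"
      using main_b[OF m0 l hyps] H succ_b[OF m0 assms(6)] succ_b[OF l assms(6)] by simp
  next
    assume "\<forall>\<mu>. inrho \<mu> \<longrightarrow> op_succeq (tensor u \<phi>) (R \<mu>)"
    then show "op_succeq (tensor u \<phi>) (R \<mu>\<^sub>0)" using m0 by blast
  qed
qed


end
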